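(* Let $f_0,f_1\in \mathrm{PL}_0(\mathbf{I})$ satisfy $[f_1^{f_0},f_0f_1^{-1}]=1$ and $[f_0f_1^{-1},f_1^{f_0^2}]=1$. Let $A=(a,c)$ be an orbital of $f_0$ that is an up-bump, and suppose $(a,c)$ is not an orbital of $f_1$. Let $(b_1,d_1),(b_2,d_2),\dots,(b_n,d_n)$, with $n\ge1$, be all the orbitals of $f_1$ that meet $(a,c)$, in increasing order. Then: (i) $a<b_1$; (ii) there is a point $p<c$ such that $f_0|_{[p,c]}=f_1|_{[p,c]}$; (iii) $d_n=c$; (iv) if $p$ is the minimal point such that $f_0|_{[p,c]}=f_1|_{[p,c]}$, then $b_nf_0\ge p$; (v) $b_1f_0>b_n$.
   Context: $\mathrm{PL}_0(\mathbf{I})$ is the group of orientation-preserving piecewise-linear homeomorphisms of $[0,1]$ with finitely many points of non-differentiability. Functions act on the right: $tf=f(t)$, $fg=g\circ f$, $a^b=b^{-1}ab$, $[a,b]=aba^{-1}b^{-1}$. The orbitals of $f$ are the connected components (open intervals) of $\operatorname{Supp}(f)=\{x: xf\ne x\}$; an orbital $A$ is an up-bump if $xf>x$ for all $x\in A$. Orbitals are ordered by $A<B$ if every point of $A$ is less than every point of $B$. *)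

theory Defs
  imports "HOL-Analysis.Analysis"
begin

definition PL0 :: "(real \<Rightarrow> real) \<Rightarrow> bool" where
  "PL0 f \<longleftrightarrow>
     bij_betw f {0..1} {0..1} \<and> strict_mono_on {0..1} f \<and>
     (\<forall>x. x \<notin> {0..1} \<longrightarrow> f x = x) \<and>
     (\<exists>T. finite T \<and> {0,1} \<subseteq> T \<and> T \<subseteq> {0..1} \<and>
        (\<forall>u\<in>T. \<forall>v\<in>T. u < v \<and> {u<..<v} \<inter> T = {} \<longrightarrow>
           (\<exists>m k. \<forall>x\<in>{u..v}. f x = m * x + k)))"

text \<open>Right action: t(fg) = g(f(t)).\<close>
definition rmul :: "(real \<Rightarrow> real) \<Rightarrow> (real \<Rightarrow> real) \<Rightarrow> (real \<Rightarrow> real)" where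
  "rmul f g = g \<circ> f"

definition rinv :: "(real \<Rightarrow> real) \<Rightarrow> (real \<Rightarrow> real)" where
  "rinv f = inv f"

definition conjg :: "(real \<Rightarrow> real) \<Rightarrow> (real \<Rightarrow> real) \<Rightarrow> (real \<Rightarrow> real)" where
  "conjg a b = rmul (rmul (rinv b) a) b"

definition commg :: "(real \<Rightarrow> real) \<Rightarrow> (real \<Rightarrow> real) \<Rightarrow> (real \<Rightarrow> real)" where
  "commg a b = rmul (rmul (rmul a b) (rinv a)) (rinv b)"

definition supp :: "(real \<Rightarrow> real) \<Rightarrow> real set" where
  "supp f = {x. f x \<noteq> x}"

definition orbital :: "(real \<Rightarrow> real) \<Rightarrow> real set \<Rightarrow> bool" where
  "orbital f A \<longleftrightarrow> A \<in> components (supp f)"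

definition up_bump :: "(real \<Rightarrow> real) \<Rightarrow> real set \<Rightarrow> bool" where
  "up_bump f A \<longleftrightarrow> orbital f A \<and> (\<forall>x\<in>A. f x > x)"

end

theory Submission
  imports Defs
begin


definition G :: "(real \<Rightarrow> real) \<Rightarrow> bool" where
 "G f \<longleftrightarrow> strict_mono f \<and> surj f \<and> (\<forall>x. x \<notin> {0..1} \<longrightarrow> f x = x) \<and>
   (\<forall>x. \<exists>e>0. \<exists>m k. \<forall>y\<in>{x..x+e}. f y = m*y+k) \<and>
   (\<forall>x. \<exists>e>0. \<exists>m k. \<forall>y\<in>{x-e..x}. f y = m*y+k)"

lemma G_smono: "G f \<Longrightarrow> strict_mono f" by (simp add: G_def)
lemma G_surj: "G f \<Longrightarrow> surj f" by (simp add: G_def)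
lemma G_out: "G f \<Longrightarrow> x \<notin> {0..1} \<Longrightarrow> f x = x" by (simp add: G_def)
lemma G_rg: "G f \<Longrightarrow> \<exists>e>0. \<exists>m k. \<forall>y\<in>{x..x+e}. f y = m*y+k" by (simp add: G_def)
lemma G_lg: "G f \<Longrightarrow> \<exists>e>0. \<exists>m k. \<forall>y\<in>{x-e..x}. f y = m*y+k" by (simp add: G_def)
lemma G_inj: "G f \<Longrightarrow> inj f" using G_smono strict_mono_imp_inj_on by blast
lemma G_bij: "G f \<Longrightarrow> bij f" by (simp add: G_inj G_surj bij_def)
lemma G_invl[simp]: "G f \<Longrightarrow> inv f (f x) = x" by (rule inv_f_f[OF G_inj])
lemma G_invr[simp]: "G f \<Longrightarrow> f (inv f x) = x" by (rule surj_f_inv_f[OF G_surj])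
lemma G_less[simp]: "G f \<Longrightarrow> f x < f y \<longleftrightarrow> x < y" by (rule strict_mono_less[OF G_smono])
lemma G_le[simp]: "G f \<Longrightarrow> f x \<le> f y \<longleftrightarrow> x \<le> y" by (rule strict_mono_less_eq[OF G_smono])
lemma G_eq[simp]: "G f \<Longrightarrow> f x = f y \<longleftrightarrow> x = y" using G_inj injD by metis

lemma affine_slope_pos:
  fixes f :: "real \<Rightarrow> real"
  assumes sm: "strict_mono f" and e: "e > 0" and h: "\<forall>y\<in>{x..x+e}. f y = m*y+k"
  shows "m > 0"
proof -
  have "f x < f (x+e)" using e by (intro strict_monoD[OF sm]) simp
  moreover have "f x = m*x+k" "f (x+e) = m*(x+e)+k" using h e by auto
  ultimately have "m*e > 0" by (simp add: algebra_simps)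
  thus ?thesis using e by (simp add: zero_less_mult_iff)
qed

lemma affine_slope_pos_l:
  fixes f :: "real \<Rightarrow> real"
  assumes sm: "strict_mono f" and e: "e > 0" and h: "\<forall>y\<in>{x-e..x}. f y = m*y+k"
  shows "m > 0"
proof -
  have "f (x-e) < f x" using sm e by (simp add: strict_mono_less)
  moreover have "f x = m*x+k" "f (x-e) = m*(x-e)+k" using h e by auto
  ultimately have "m*e > 0" by (simp add: algebra_simps)
  thus ?thesis using e by (simp add: zero_less_mult_iff)
qed

lemma G_cont_at: assumes "G f" shows "isCont f x"
proof -
  obtain e1 m1 k1 where e1: "e1>0" and h1: "\<forall>y\<in>{x..x+e1}. f y = m1*y+k1" using G_rg[OF assms] by blast
  obtain e2 m2 k2 where e2: "e2>0" and h2: "\<forall>y\<in>{x-e2..x}. f y = m2*y+k2" using G_lg[OF assms] by blast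
  show ?thesis unfolding continuous_at_eps_delta
  proof (intro allI impI)
    fix \<epsilon> :: real assume ep: "\<epsilon> > 0"
    define M where "M = \<bar>m1\<bar> + \<bar>m2\<bar> + 1"
    have M: "M > 0" unfolding M_def by simp
    define dd where "dd = min (min e1 e2) (\<epsilon>/M)"
    have dd: "dd > 0" using e1 e2 ep M by (simp add: dd_def)
    have "\<forall>y. dist y x < dd \<longrightarrow> dist (f y) (f x) < \<epsilon>"
    proof (intro allI impI)
      fix y assume "dist y x < dd"
      hence yx: "\<bar>y - x\<bar> < dd" by (simp add: dist_real_def)
      have "\<bar>y-x\<bar> * M < \<epsilon>" using yx M unfolding dd_def by (simp add: pos_less_divide_eq)
      show "dist (f y) (f x) < \<epsilon>"
      proof (cases "y \<ge> x")
        case True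
        hence "f y = m1*y+k1" "f x = m1*x+k1" using h1 yx e1 unfolding dd_def by auto
        hence "\<bar>f y - f x\<bar> = \<bar>m1\<bar> * \<bar>y-x\<bar>" by (simp add: algebra_simps abs_mult[symmetric])
        also have "\<dots> \<le> M * \<bar>y - x\<bar>" unfolding M_def by (intro mult_right_mono) auto
        finally show ?thesis using \<open>\<bar>y-x\<bar> * M < \<epsilon>\<close> by (simp add: dist_real_def mult.commute)
      next
        case False
        hence "f y = m2*y+k2" "f x = m2*x+k2" using h2 yx e2 unfolding dd_def by auto
        hence "\<bar>f y - f x\<bar> = \<bar>m2\<bar> * \<bar>y-x\<bar>" by (simp add: algebra_simps abs_mult[symmetric])
        also have "\<dots> \<le> M * \<bar>y - x\<bar>" unfolding M_def by (intro mult_right_mono) auto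
        finally show ?thesis using \<open>\<bar>y-x\<bar> * M < \<epsilon>\<close> by (simp add: dist_real_def mult.commute)
      qed
    qed
    thus "\<exists>d>0. \<forall>y. dist y x < d \<longrightarrow> dist (f y) (f x) < \<epsilon>" using dd by blast
  qed
qed

lemma G_cont: "G f \<Longrightarrow> continuous_on S f"
  using G_cont_at continuous_at_imp_continuous_on by blast

lemma G_0: assumes "G f" shows "f 0 = 0"
proof -
  obtain e m k where e: "e>0" and h: "\<forall>y\<in>{0-e..0}. f y = m*y+k" using G_lg[OF assms] by blast
  have A1: "f (-e) = m*(-e)+k" by (rule h[rule_format]) (use e in auto)
  have A2: "f (-e) = -e" by (rule G_out[OF assms]) (use e in auto)
  have A: "m*(-e)+k = -e" using A1 A2 by argo
  have B1: "f (-e/2) = m*(-e/2)+k" by (rule h[rule_format]) (use e in auto)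
  have B2: "f (-e/2) = -e/2" by (rule G_out[OF assms]) (use e in auto)
  have B: "m*(-e/2)+k = -e/2" using B1 B2 by argo
  have C: "f 0 = k" using h[rule_format, of 0] e by simp
  from A B have "(m - 1) * e = 0" by algebra
  hence "m = 1" using e by simp
  thus ?thesis using A C by simp
qed

lemma G_1: assumes "G f" shows "f 1 = 1"
proof -
  obtain e m k where e: "e>0" and h: "\<forall>y\<in>{1..1+e}. f y = m*y+k" using G_rg[OF assms] by blast
  have A1: "f (1+e) = m*(1+e)+k" by (rule h[rule_format]) (use e in auto)
  have A2: "f (1+e) = 1+e" by (rule G_out[OF assms]) (use e in auto)
  have A: "m*(1+e)+k = 1+e" using A1 A2 by argo
  have B1: "f (1+e/2) = m*(1+e/2)+k" by (rule h[rule_format]) (use e in auto)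
  have B2: "f (1+e/2) = 1+e/2" by (rule G_out[OF assms]) (use e in auto)
  have B: "m*(1+e/2)+k = 1+e/2" using B1 B2 by argo
  have C: "f 1 = m+k" using h[rule_format, of 1] e by simp
  from A B have "(m - 1) * e = 0" by algebra
  hence "m = 1" using e by simp
  thus ?thesis using A C by simp
qed



lemma G_comp: assumes F: "G f" and H: "G h" shows "G (f \<circ> h)"
proof -
  have sm: "strict_mono (f \<circ> h)" using G_smono[OF F] G_smono[OF H]
    unfolding strict_mono_def by simp
  have su: "surj (f \<circ> h)" using G_surj[OF F] G_surj[OF H] by (rule comp_surj[rotated])
  have out: "\<forall>x. x \<notin> {0..1} \<longrightarrow> (f \<circ> h) x = x" using G_out[OF F] G_out[OF H] by simp
  have rg: "\<exists>e>0. \<exists>m k. \<forall>y\<in>{x..x+e}. (f \<circ> h) y = m*y+k" for x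
  proof -
    obtain e1 m1 k1 where e1: "e1>0" and h1: "\<forall>y\<in>{x..x+e1}. h y = m1*y+k1" using G_rg[OF H] by blast
    have m1: "m1 > 0" using affine_slope_pos[OF G_smono[OF H] e1 h1] .
    obtain e2 m2 k2 where e2: "e2>0" and h2: "\<forall>y\<in>{h x..h x+e2}. f y = m2*y+k2" using G_rg[OF F] by blast
    define e where "e = min e1 (e2/m1)"
    have e: "e > 0" using e1 e2 m1 by (simp add: e_def)
    have "\<forall>y\<in>{x..x+e}. (f \<circ> h) y = (m2*m1)*y+(m2*k1+k2)"
    proof
      fix y assume y: "y \<in> {x..x+e}"
      hence y1: "y \<in> {x..x+e1}" by (auto simp: e_def)
      have hy: "h y = m1*y+k1" "h x = m1*x+k1" using h1 y1 e1 by auto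
      have "m1*(y-x) \<le> m1*(e2/m1)" using y m1 by (intro mult_left_mono) (auto simp: e_def)
      hence "m1*(y-x) \<le> e2" using m1 by simp
      hence "h y \<in> {h x..h x+e2}" using hy y m1 by (auto simp: algebra_simps)
      hence "f (h y) = m2*(h y)+k2" using h2 by blast
      thus "(f \<circ> h) y = (m2*m1)*y+(m2*k1+k2)" using hy by (simp add: algebra_simps)
    qed
    thus ?thesis using e by blast
  qed
  have lg: "\<exists>e>0. \<exists>m k. \<forall>y\<in>{x-e..x}. (f \<circ> h) y = m*y+k" for x
  proof -
    obtain e1 m1 k1 where e1: "e1>0" and h1: "\<forall>y\<in>{x-e1..x}. h y = m1*y+k1" using G_lg[OF H] by blast
    have m1: "m1 > 0" using affine_slope_pos_l[OF G_smono[OF H] e1 h1] .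
    obtain e2 m2 k2 where e2: "e2>0" and h2: "\<forall>y\<in>{h x-e2..h x}. f y = m2*y+k2" using G_lg[OF F] by blast
    define e where "e = min e1 (e2/m1)"
    have e: "e > 0" using e1 e2 m1 by (simp add: e_def)
    have "\<forall>y\<in>{x-e..x}. (f \<circ> h) y = (m2*m1)*y+(m2*k1+k2)"
    proof
      fix y assume y: "y \<in> {x-e..x}"
      hence y1: "y \<in> {x-e1..x}" by (auto simp: e_def)
      have hy: "h y = m1*y+k1" "h x = m1*x+k1" using h1 y1 e1 by auto
      have "m1*(x-y) \<le> m1*(e2/m1)" using y m1 by (intro mult_left_mono) (auto simp: e_def)
      hence "m1*(x-y) \<le> e2" using m1 by simp
      hence "h y \<in> {h x-e2..h x}" using hy y m1 by (auto simp: algebra_simps)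
      hence "f (h y) = m2*(h y)+k2" using h2 by blast
      thus "(f \<circ> h) y = (m2*m1)*y+(m2*k1+k2)" using hy by (simp add: algebra_simps)
    qed
    thus ?thesis using e by blast
  qed
  show ?thesis unfolding G_def using sm su out rg lg by blast
qed

lemma G_inv: assumes F: "G f" shows "G (inv f)"
proof -
  have sm: "strict_mono (inv f)" unfolding strict_mono_def
  proof (intro allI impI)
    fix x y :: real assume "x < y"
    show "inv f x < inv f y"
    proof (rule ccontr)
      assume "\<not> inv f x < inv f y"
      hence "inv f y \<le> inv f x" by simp
      hence "y \<le> x" by (metis G_le[OF F] G_invr[OF F])
      thus False using \<open>x<y\<close> by simp
    qed
  qed
  have su: "surj (inv f)" using G_invl[OF F] by (metis surjI)
  have out: "\<forall>x. x \<notin> {0..1} \<longrightarrow> inv f x = x" using G_out[OF F] G_invl[OF F] by metis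
  have rg: "\<exists>e>0. \<exists>m k. \<forall>y\<in>{z..z+e}. inv f y = m*y+k" for z
  proof -
    define x where "x = inv f z"
    obtain e m k where e: "e>0" and h: "\<forall>y\<in>{x..x+e}. f y = m*y+k" using G_rg[OF F] by blast
    have m: "m > 0" using affine_slope_pos[OF G_smono[OF F] e h] .
    have fx: "f x = z" using F by (simp add: x_def)
    have zx: "z = m*x+k" using h e fx by auto
    have "\<forall>w\<in>{z..z+m*e}. inv f w = (1/m)*w+(-k/m)"
    proof
      fix w assume w: "w \<in> {z..z+m*e}"
      define y where "y = (w-k)/m"
      have yx: "y - x = (w - z)/m" using zx m unfolding y_def by (simp add: field_simps)
      have d1: "(w - z)/m \<ge> 0" using w m by simp
      have d2: "(w - z)/m \<le> e" using w m by (simp add: pos_divide_le_eq mult.commute)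
      have "y \<in> {x..x+e}" using yx d1 d2 by auto
      hence "f y = m*y+k" using h by blast
      also have "\<dots> = w" using m unfolding y_def by simp
      finally have "inv f w = y" using G_invl[OF F] by metis
      thus "inv f w = (1/m)*w+(-k/m)" unfolding y_def using m by (simp add: diff_divide_distrib)
    qed
    hence "\<exists>m2 k2. \<forall>w\<in>{z..z+m*e}. inv f w = m2*w+k2" by blast
    thus ?thesis using e m by (intro exI[of _ "m*e"]) auto
  qed
  have lg: "\<exists>e>0. \<exists>m k. \<forall>y\<in>{z-e..z}. inv f y = m*y+k" for z
  proof -
    define x where "x = inv f z"
    obtain e m k where e: "e>0" and h: "\<forall>y\<in>{x-e..x}. f y = m*y+k" using G_lg[OF F] by blast
    have m: "m > 0" using affine_slope_pos_l[OF G_smono[OF F] e h] .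
    have fx: "f x = z" using F by (simp add: x_def)
    have zx: "z = m*x+k" using h e fx by auto
    have "\<forall>w\<in>{z-m*e..z}. inv f w = (1/m)*w+(-k/m)"
    proof
      fix w assume w: "w \<in> {z-m*e..z}"
      define y where "y = (w-k)/m"
      have yx: "x - y = (z - w)/m" using zx m unfolding y_def by (simp add: field_simps)
      have d1: "(z - w)/m \<ge> 0" using w m by simp
      have d2: "(z - w)/m \<le> e" using w m by (simp add: pos_divide_le_eq mult.commute)
      have "y \<in> {x-e..x}" using yx d1 d2 by auto
      hence "f y = m*y+k" using h by blast
      also have "\<dots> = w" using m unfolding y_def by simp
      finally have "inv f w = y" using G_invl[OF F] by metis
      thus "inv f w = (1/m)*w+(-k/m)" unfolding y_def using m by (simp add: diff_divide_distrib)
    qed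
    hence "\<exists>m2 k2. \<forall>w\<in>{z-m*e..z}. inv f w = m2*w+k2" by blast
    thus ?thesis using e m by (intro exI[of _ "m*e"]) auto
  qed
  show ?thesis unfolding G_def using sm su out rg lg by blast
qed



lemma PL0_G: assumes P: "PL0 f" shows "G f"
proof -
  have bb: "bij_betw f {0..1} {0..1}" and smo: "strict_mono_on {0..1} f"
    and out: "\<forall>x. x \<notin> {0..1} \<longrightarrow> f x = x" using P unfolding PL0_def by auto
  obtain T where T: "finite T" "{0,1} \<subseteq> T" "T \<subseteq> {0..1}"
    and aff: "\<forall>u\<in>T. \<forall>v\<in>T. u < v \<and> {u<..<v} \<inter> T = {} \<longrightarrow> (\<exists>m k. \<forall>x\<in>{u..v}. f x = m * x + k)"
    using P unfolding PL0_def by blast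
  have img: "f ` {0..1} = {0..1}" using bb by (simp add: bij_betw_def)
  have le01: "x \<in> {0..1} \<Longrightarrow> y \<in> {0..1} \<Longrightarrow> x \<le> y \<Longrightarrow> f x \<le> f y" for x y
    using smo by (metis order_le_less strict_mono_onD)
  have in01: "x \<in> {0..1} \<Longrightarrow> f x \<in> {0..1}" for x using img by blast
  have f1: "f 1 = 1"
  proof -
    obtain z where z: "z \<in> {0..1}" "f z = 1" using img by (metis atLeastAtMost_iff imageE order_refl zero_le_one)
    have "f z \<le> f 1" using z by (intro le01) auto
    thus ?thesis using z in01[of 1] by auto
  qed
  have f0: "f 0 = 0"
  proof -
    obtain z where z: "z \<in> {0..1}" "f z = 0" using img by (metis atLeastAtMost_iff imageE order_refl zero_le_one)
    have "f 0 \<le> f z" using z by (intro le01) auto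
    thus ?thesis using z in01[of 0] by auto
  qed
  have sm: "strict_mono f" unfolding strict_mono_def
  proof (intro allI impI)
    fix x y :: real assume xy: "x < y"
    show "f x < f y"
    proof (cases "x \<in> {0..1}")
      case True
      show ?thesis
      proof (cases "y \<in> {0..1}")
        case True then show ?thesis using \<open>x \<in> {0..1}\<close> xy smo by (simp add: strict_mono_onD)
      next
        case False
        hence "y > 1" using xy True by auto
        thus ?thesis using in01[OF True] out False by auto
      qed
    next
      case False
      hence fx: "f x = x" using out by auto
      show ?thesis
      proof (cases "y \<in> {0..1}")
        case True
        hence "x < 0" using xy False by auto
        thus ?thesis using in01[OF True] fx by auto
      next
        case False then show ?thesis using out fx xy by auto
      qed
    qed
  qed
  have su: "surj f"
  proof -
    have "y \<in> range f" for y
    proof (cases "y \<in> {0..1}")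
      case True then show ?thesis using img by blast
    next
      case False then show ?thesis using out by (metis rangeI)
    qed
    thus ?thesis by blast
  qed
  have idout: "y \<le> 0 \<or> y \<ge> 1 \<Longrightarrow> f y = y" for y
    using out f0 f1 by (cases "y = 0 \<or> y = 1") auto
  have gap: "u \<in> T \<Longrightarrow> v \<in> T \<Longrightarrow> u < v \<Longrightarrow> (\<forall>t\<in>T. t \<le> u \<or> v \<le> t) \<Longrightarrow> \<exists>m k. \<forall>x\<in>{u..v}. f x = m * x + k" for u v
  proof -
    assume a: "u \<in> T" "v \<in> T" "u < v" "\<forall>t\<in>T. t \<le> u \<or> v \<le> t"
    have "{u<..<v} \<inter> T = {}" using a(4) by fastforce
    thus ?thesis using aff a by blast
  qed
  have rg: "\<exists>e>0. \<exists>m k. \<forall>y\<in>{x..x+e}. f y = m*y+k" for x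
  proof (cases "x < 0 \<or> x \<ge> 1")
    case True
    define e where "e = (if x < 0 then -x else 1)"
    have "e > 0" using True by (auto simp: e_def)
    moreover have "\<forall>y\<in>{x..x+e}. f y = 1*y+0" using True idout by (auto simp: e_def)
    ultimately show ?thesis by blast
  next
    case False
    define u where "u = Max {t\<in>T. t \<le> x}"
    define v where "v = Min {t\<in>T. x < t}"
    have fu: "finite {t\<in>T. t \<le> x}" "{t\<in>T. t \<le> x} \<noteq> {}" using T False by auto
    have fv: "finite {t\<in>T. x < t}" "{t\<in>T. x < t} \<noteq> {}" using T False by auto
    have u: "u \<in> T" "u \<le> x" using Max_in[OF fu] unfolding u_def by auto
    have v: "v \<in> T" "x < v" using Min_in[OF fv] unfolding v_def by auto
    have btw: "\<forall>t\<in>T. t \<le> u \<or> v \<le> t"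
    proof
      fix t assume t: "t \<in> T"
      show "t \<le> u \<or> v \<le> t"
      proof (cases "t \<le> x")
        case True then show ?thesis using Max_ge[OF fu(1)] t unfolding u_def by auto
      next
        case False then show ?thesis using Min_le[OF fv(1)] t unfolding v_def by auto
      qed
    qed
    obtain m k where mk: "\<forall>y\<in>{u..v}. f y = m * y + k" using gap[OF u(1) v(1) _ btw] u v by auto
    have "\<forall>y\<in>{x..x+(v-x)}. f y = m*y+k" using mk u by auto
    moreover have "v - x > 0" using v by simp
    ultimately show ?thesis by blast
  qed
  have lg: "\<exists>e>0. \<exists>m k. \<forall>y\<in>{x-e..x}. f y = m*y+k" for x
  proof (cases "x \<le> 0 \<or> x > 1")
    case True
    define e where "e = (if x \<le> 0 then 1 else x - 1)"
    have "e > 0" using True by (auto simp: e_def)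
    moreover have "\<forall>y\<in>{x-e..x}. f y = 1*y+0" using True idout by (auto simp: e_def)
    ultimately show ?thesis by blast
  next
    case False
    define u where "u = Max {t\<in>T. t < x}"
    define v where "v = Min {t\<in>T. x \<le> t}"
    have fu: "finite {t\<in>T. t < x}" "{t\<in>T. t < x} \<noteq> {}" using T False by auto
    have fv: "finite {t\<in>T. x \<le> t}" "{t\<in>T. x \<le> t} \<noteq> {}" using T False by auto
    have u: "u \<in> T" "u < x" using Max_in[OF fu] unfolding u_def by auto
    have v: "v \<in> T" "x \<le> v" using Min_in[OF fv] unfolding v_def by auto
    have btw: "\<forall>t\<in>T. t \<le> u \<or> v \<le> t"
    proof
      fix t assume t: "t \<in> T"
      show "t \<le> u \<or> v \<le> t"
      proof (cases "t < x")
        case True then show ?thesis using Max_ge[OF fu(1)] t unfolding u_def by auto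
      next
        case False then show ?thesis using Min_le[OF fv(1)] t unfolding v_def by auto
      qed
    qed
    obtain m k where mk: "\<forall>y\<in>{u..v}. f y = m * y + k" using gap[OF u(1) v(1) _ btw] u v by auto
    have "\<forall>y\<in>{x-(x-u)..x}. f y = m*y+k" using mk v by auto
    moreover have "x - u > 0" using u by simp
    ultimately show ?thesis by blast
  qed
  show ?thesis unfolding G_def using sm su out rg lg by blast
qed



definition orb :: "(real \<Rightarrow> real) \<Rightarrow> real \<Rightarrow> real \<Rightarrow> bool" where
  "orb u p q \<longleftrightarrow> p < q \<and> u p = p \<and> u q = q \<and> (\<forall>x\<in>{p<..<q}. u x \<noteq> x)"

lemma orbD: "orb u p q \<Longrightarrow> p < q" "orb u p q \<Longrightarrow> u p = p" "orb u p q \<Longrightarrow> u q = q"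
  "orb u p q \<Longrightarrow> p < x \<Longrightarrow> x < q \<Longrightarrow> u x \<noteq> x"
  by (auto simp: orb_def)

lemma interval_conn: "connected D \<Longrightarrow> a \<in> D \<Longrightarrow> b \<in> D \<Longrightarrow> a \<le> x \<Longrightarrow> x \<le> b \<Longrightarrow> x \<in> (D::real set)"
  using is_interval_connected_1 is_interval_1 by blast

lemma orbital_iff: assumes pq: "p < q" shows "orbital u {p<..<q} \<longleftrightarrow> orb u p q"
proof
  assume o: "orbital u {p<..<q}"
  hence C: "{p<..<q} \<in> components (supp u)" by (simp add: orbital_def)
  hence sub: "{p<..<q} \<subseteq> supp u" by (rule in_components_subset)
  have max: "\<And>D. D \<noteq> {} \<Longrightarrow> {p<..<q} \<subseteq> D \<Longrightarrow> D \<subseteq> supp u \<Longrightarrow> connected D \<Longrightarrow> D = {p<..<q}"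
    using C unfolding in_components_maximal by blast
  have "u p = p"
  proof (rule ccontr)
    assume "u p \<noteq> p"
    have "{p..<q} \<subseteq> supp u"
    proof
      fix y assume "y \<in> {p..<q}"
      then show "y \<in> supp u" using sub \<open>u p \<noteq> p\<close> by (cases "y = p") (auto simp: supp_def less_le subset_iff)
    qed
    moreover have "connected {p..<q}" by (simp add: is_interval_connected_1[symmetric] is_interval_1)
    ultimately have "{p..<q} = {p<..<q}" using pq by (intro max) auto
    hence "p \<in> {p<..<q}" using pq by (metis atLeastLessThan_iff order_refl)
    thus False by simp
  qed
  moreover have "u q = q"
  proof (rule ccontr)
    assume "u q \<noteq> q"
    have "{p<..q} \<subseteq> supp u"
    proof
      fix y assume "y \<in> {p<..q}"
      then show "y \<in> supp u" using sub \<open>u q \<noteq> q\<close> by (cases "y = q") (auto simp: supp_def less_le subset_iff)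
    qed
    moreover have "connected {p<..q}" by (simp add: is_interval_connected_1[symmetric] is_interval_1)
    ultimately have "{p<..q} = {p<..<q}" using pq by (intro max) auto
    hence "q \<in> {p<..<q}" using pq by (metis greaterThanAtMost_iff order_refl)
    thus False by simp
  qed
  moreover have "\<forall>x\<in>{p<..<q}. u x \<noteq> x" using sub by (auto simp: supp_def)
  ultimately show "orb u p q" using pq by (simp add: orb_def)
next
  assume o: "orb u p q"
  have sub: "{p<..<q} \<subseteq> supp u" using o by (auto simp: orb_def supp_def)
  have conn: "connected {p<..<q}" by (simp add: is_interval_connected_1[symmetric] is_interval_1)
  have "D = {p<..<q}" if D: "D \<noteq> {}" "{p<..<q} \<subseteq> D" "D \<subseteq> supp u" "connected D" for D
  proof
    show "D \<subseteq> {p<..<q}"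
    proof
      fix x assume x: "x \<in> D"
      define m where "m = (p+q)/2"
      have m: "m \<in> D" "p < m" "m < q" using D(2) pq by (auto simp: m_def)
      have "x < q"
      proof (rule ccontr)
        assume "\<not> x < q"
        hence "q \<in> D" using interval_conn[OF D(4) m(1) x] m by auto
        thus False using D(3) o by (auto simp: orb_def supp_def)
      qed
      moreover have "p < x"
      proof (rule ccontr)
        assume "\<not> p < x"
        hence "p \<in> D" using interval_conn[OF D(4) x m(1)] m by auto
        thus False using D(3) o by (auto simp: orb_def supp_def)
      qed
      ultimately show "x \<in> {p<..<q}" by simp
    qed
  qed (use that in auto)
  thus "orbital u {p<..<q}" unfolding orbital_def in_components_maximal
    using sub conn pq by auto
qed

lemma orb_overlap: assumes "orb u p q" "orb u p' q'" "p < x" "x < q" "p' < x" "x < q'"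
  shows "p = p' \<and> q = q'"
proof -
  have "\<not> p < p'" using assms by (metis orbD(2,4) less_trans)
  moreover have "\<not> p' < p" using assms by (metis orbD(2,4) less_trans)
  moreover have "\<not> q < q'" using assms by (metis orbD(3,4) less_trans)
  moreover have "\<not> q' < q" using assms by (metis orbD(3,4) less_trans)
  ultimately show ?thesis by auto
qed

lemma orb_conj: assumes F: "G f" and o: "orb u p q" shows "orb (f \<circ> (u \<circ> inv f)) (f p) (f q)"
proof -
  have "f p < f q" using o F by (simp add: orb_def)
  moreover have "(f \<circ> (u \<circ> inv f)) (f p) = f p" "(f \<circ> (u \<circ> inv f)) (f q) = f q" using o F by (auto simp: orb_def)
  moreover have "(f \<circ> (u \<circ> inv f)) y \<noteq> y" if y: "f p < y" "y < f q" for y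
  proof -
    have "f p < f (inv f y)" "f (inv f y) < f q" using y G_invr[OF F] by auto
    hence "p < inv f y" "inv f y < q" using G_less[OF F] by blast+
    hence "u (inv f y) \<noteq> inv f y" using o by (simp add: orb_def)
    hence "f (u (inv f y)) \<noteq> f (inv f y)" using G_eq[OF F] by blast
    thus ?thesis using G_invr[OF F] by simp
  qed
  ultimately show ?thesis by (simp add: orb_def)
qed

lemma orb_in: assumes "G u" "orb u p q" "p < x" "x < q" shows "p < u x \<and> u x < q"
  using assms by (metis G_less orbD(2,3))

lemma orb_inv: assumes U: "G u" and o: "orb u p q" shows "orb (inv u) p q"
  using o U unfolding orb_def by (metis G_invl G_invr)

lemma orb_sign: assumes U: "G u" and o: "orb u p q"
  shows "(\<forall>x\<in>{p<..<q}. u x < x) \<or> (\<forall>x\<in>{p<..<q}. u x > x)"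
proof (rule ccontr)
  assume "\<not> ?thesis"
  then obtain x1 x2 where x: "x1 \<in> {p<..<q}" "x2 \<in> {p<..<q}" "u x1 \<ge> x1" "u x2 \<le> x2" by force
  have ne: "u x1 \<noteq> x1" "u x2 \<noteq> x2" using x o by (auto simp: orb_def)
  have c: "continuous_on S (\<lambda>x. u x - x)" for S by (intro continuous_intros G_cont[OF U])
  have "\<exists>z. min x1 x2 \<le> z \<and> z \<le> max x1 x2 \<and> u z - z = 0"
  proof (cases "x1 \<le> x2")
    case True then show ?thesis using IVT2'[of "\<lambda>x. u x - x" x2 0 x1, OF _ _ True c] x by auto
  next
    case False then show ?thesis using IVT'[of "\<lambda>x. u x - x" x2 0 x1, OF _ _ _ c] x by auto
  qed
  then obtain z where z: "min x1 x2 \<le> z" "z \<le> max x1 x2" "u z = z" by auto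
  have "z \<in> {p<..<q}" using z x by auto
  thus False using z o by (auto simp: orb_def)
qed

lemma orb_exists: assumes U: "G u" and ux: "u x \<noteq> x" shows "\<exists>p q. orb u p q \<and> p < x \<and> x < q"
proof -
  have x01: "0 < x" "x < 1" using ux G_0[OF U] G_1[OF U] G_out[OF U, of x] by (auto simp: less_le)
  have cl: "closed {y. u y = y}" by (intro closed_Collect_eq G_cont[OF U] continuous_on_id)
  define A where "A = {y. u y = y} \<inter> {..x}"
  define B where "B = {y. u y = y} \<inter> {x..}"
  have A: "A \<noteq> {}" "bdd_above A" "closed A" using cl G_0[OF U] x01 by (auto simp: A_def intro: closed_Int)
  have B: "B \<noteq> {}" "bdd_below B" "closed B" using cl G_1[OF U] x01 by (auto simp: B_def intro: closed_Int)
  define p where "p = Sup A"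
  define q where "q = Inf B"
  have pA: "p \<in> A" using closed_contains_Sup[OF A] by (simp add: p_def)
  have qB: "q \<in> B" using closed_contains_Inf[OF B] by (simp add: q_def)
  have px: "p < x" using pA ux by (auto simp: A_def less_le)
  have qx: "x < q" using qB ux by (auto simp: B_def less_le)
  have "u y \<noteq> y" if y: "p < y" "y < q" for y
  proof
    assume uy: "u y = y"
    show False
    proof (cases "y \<le> x")
      case True
      hence "y \<in> A" using uy by (simp add: A_def)
      hence "y \<le> p" unfolding p_def using A(2) by (rule cSup_upper)
      thus False using y by simp
    next
      case False
      hence "y \<in> B" using uy by (simp add: B_def)
      hence "q \<le> y" unfolding q_def using B(2) by (rule cInf_lower)
      thus False using y by simp
    qed
  qed
  hence "orb u p q" using pA qB px qx by (auto simp: orb_def A_def B_def)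
  thus ?thesis using px qx by blast
qed



lemma G_id: "G id"
proof -
  have r: "\<exists>e>0. \<exists>m k. \<forall>y\<in>{x..x+e}. id y = m*y+k" for x :: real
    by (rule exI[of _ 1], simp, rule exI[of _ 1], rule exI[of _ 0], simp)
  have l: "\<exists>e>0. \<exists>m k. \<forall>y\<in>{x-e..x}. id y = m*y+k" for x :: real
    by (rule exI[of _ 1], simp, rule exI[of _ 1], rule exI[of _ 0], simp)
  show ?thesis unfolding G_def using r l by (simp add: strict_mono_def)
qed

lemma G_funpow: "G w \<Longrightarrow> G (w ^^ n)"
  by (induction n) (simp_all add: G_id G_comp)

lemma iter_in: assumes U: "G u" "u p = p" and dec: "\<forall>x\<in>{p<..<q}. u x < x" and y: "p < y" "y < q"
  shows "p < (u^^n) y \<and> (u^^n) y < q"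
proof (induction n)
  case 0 then show ?case using y by simp
next
  case (Suc n)
  have "p < u ((u^^n) y)" using Suc U by (metis G_less)
  moreover have "u ((u^^n) y) < (u^^n) y" using Suc dec by auto
  ultimately show ?case using Suc by simp
qed

lemma iter_to_p: assumes U: "G u" "u p = p" and dec: "\<forall>x\<in>{p<..<q}. u x < x" and y: "p < y" "y < q"
  and e: "e > 0" shows "\<exists>n. (u^^n) y < p + e"
proof -
  define s where "s n = (u^^n) y" for n
  have sin: "p < s n \<and> s n < q" for n using iter_in[OF U dec y] by (simp add: s_def)
  have ds: "s (Suc n) < s n" for n using sin[of n] dec by (simp add: s_def)
  have dec_s: "decseq s" using ds by (intro decseq_SucI) (simp add: less_imp_le)
  have bb: "bdd_below (range s)" unfolding bdd_below_def using sin by (metis less_imp_le rangeE)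
  define L where "L = (INF i. s i)"
  have lim: "s \<longlonglongrightarrow> L" unfolding L_def by (rule LIMSEQ_decseq_INF[OF bb dec_s])
  have pL: "p \<le> L" unfolding L_def using sin by (intro cINF_greatest) (auto intro: less_imp_le)
  have Ly: "L \<le> y" unfolding L_def using cINF_lower[OF bb, of 0] by (simp add: s_def)
  have lim2: "(\<lambda>n. s (Suc n)) \<longlonglongrightarrow> u L"
  proof -
    have "(\<lambda>n. u (s n)) \<longlonglongrightarrow> u L" using lim G_cont_at[OF U(1)] by (rule isCont_tendsto_compose[rotated])
    thus ?thesis by (simp add: s_def)
  qed
  have "(\<lambda>n. s (Suc n)) \<longlonglongrightarrow> L" using lim by (rule LIMSEQ_Suc)
  hence uL: "u L = L" using lim2 LIMSEQ_unique by blast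
  have "L = p"
  proof (rule ccontr)
    assume "L \<noteq> p"
    hence "p < L" "L < q" using pL Ly y by auto
    hence "u L < L" using dec by auto
    thus False using uL by simp
  qed
  hence "eventually (\<lambda>n. s n < p + e) sequentially" using order_tendstoD(2)[OF lim] e by simp
  then obtain n where "s n < p + e" by (auto simp: eventually_sequentially)
  thus ?thesis by (auto simp: s_def)
qed

lemma comm_iter: assumes U: "G u" "u p = p" and dec: "\<forall>x\<in>{p<..<q}. u x < x"
  and comm: "\<forall>x\<in>{p<..<q}. v (u x) = u (v x)" and y: "p < y" "y < q"
  shows "v ((u^^n) y) = (u^^n) (v y)"
proof (induction n)
  case 0 then show ?case by simp
next
  case (Suc n)
  have "p < (u^^n) y" "(u^^n) y < q" using iter_in[OF U dec y] by auto
  hence "v (u ((u^^n) y)) = u (v ((u^^n) y))" using comm by auto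
  thus ?case using Suc by simp
qed

lemma L_full:
  assumes U: "G u" "u p = p" and dec: "\<forall>x\<in>{p<..<q}. u x < x"
    and comm: "\<forall>x\<in>{p<..<q}. v (u x) = u (v x)" and vp: "v p = p"
    and e: "e > 0" and germ: "\<forall>y\<in>{p..p+e}. v y = m*y+k"
    and x0: "p < x0" "x0 < q" "v x0 = x0"
  shows "\<forall>x\<in>{p<..<q}. v x = x"
proof -
  obtain n where n: "(u^^n) x0 < p + e" using iter_to_p[OF U dec x0(1,2) e] by blast
  define z where "z = (u^^n) x0"
  have z: "p < z" "z < p + e" using iter_in[OF U dec x0(1,2), of n] n by (auto simp: z_def)
  have vz: "v z = z" using comm_iter[OF U dec comm x0(1,2), of n] x0(3) by (simp add: z_def)
  have A: "m*p+k = p" using germ vp e by auto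
  have B: "m*z+k = z" using germ vz z by auto
  have "(m-1)*(z-p) = (m*z+k - z) - (m*p+k-p)" by (simp add: algebra_simps)
  hence "(m-1)*(z-p) = 0" using A B by simp
  hence m1: "m = 1" using z by simp
  hence k0: "k = 0" using A by simp
  have idp: "\<forall>y\<in>{p..p+e}. v y = y" using germ m1 k0 by simp
  show ?thesis
  proof
    fix y assume y: "y \<in> {p<..<q}"
    obtain n where n: "(u^^n) y < p + e" using iter_to_p[OF U dec _ _ e] y by auto
    have "p < (u^^n) y" using iter_in[OF U dec] y by auto
    hence "v ((u^^n) y) = (u^^n) y" using idp n by auto
    hence "(u^^n) (v y) = (u^^n) y" using comm_iter[OF U dec comm] y by auto
    moreover have "inj (u^^n)" using G_inj[OF U(1)] by simp
    ultimately show "v y = y" by (meson injD)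
  qed
qed

lemma K2_local:
  assumes U: "G u" and o: "orb u p q"
    and comm: "\<forall>x\<in>{p<..<q}. v (u x) = u (v x)" and vp: "v p = p"
    and e: "e > 0" and germ: "\<forall>y\<in>{p..p+e}. v y = m*y+k"
    and x0: "p < x0" "x0 < q" "v x0 = x0"
  shows "\<forall>x\<in>{p<..<q}. v x = x"
proof (cases "\<forall>x\<in>{p<..<q}. u x < x")
  case True
  show ?thesis by (rule L_full[OF U orbD(2)[OF o] True comm vp e germ x0])
next
  case False
  hence inc: "\<forall>x\<in>{p<..<q}. u x > x" using orb_sign[OF U o] by blast
  have U': "G (inv u)" by (rule G_inv[OF U])
  have o': "orb (inv u) p q" by (rule orb_inv[OF U o])
  have dec': "\<forall>x\<in>{p<..<q}. inv u x < x"
  proof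
    fix x assume x: "x \<in> {p<..<q}"
    hence z: "p < inv u x" "inv u x < q" using orb_in[OF U' o'] by auto
    hence "u (inv u x) > inv u x" using inc by auto
    thus "inv u x < x" using G_invr[OF U] by simp
  qed
  have comm': "\<forall>x\<in>{p<..<q}. v (inv u x) = inv u (v x)"
  proof
    fix x assume x: "x \<in> {p<..<q}"
    hence z: "p < inv u x" "inv u x < q" using orb_in[OF U' o'] by auto
    hence "v (u (inv u x)) = u (v (inv u x))" using comm by auto
    hence "v x = u (v (inv u x))" using G_invr[OF U] by simp
    hence "inv u (v x) = v (inv u x)" using G_invl[OF U] by simp
    thus "v (inv u x) = inv u (v x)" by simp
  qed
  show ?thesis by (rule L_full[OF U' orbD(2)[OF o'] dec' comm' vp e germ x0])
qed



lemma comm_funpow: "\<forall>x. u (w x) = w (u x) \<Longrightarrow> u ((w^^n) x) = (w^^n) (u x)"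
  by (induction n arbitrary: x) auto

lemma S_lemma:
  assumes U: "G u" and W: "G w" and comm: "\<forall>x. u (w x) = w (u x)" and o: "orb u p q"
    and wp: "w p > p"
  shows False
proof -
  have pq: "p < q" "u p = p" "u q = q" using o by (auto simp: orb_def)
  have wpq: "q \<le> w p"
  proof (rule ccontr)
    assume "\<not> q \<le> w p"
    hence "u (w p) \<noteq> w p" using o wp by (auto simp: orb_def)
    thus False using comm pq by metis
  qed
  define P where "P n = (w^^n) p" for n
  define m where "m = (p+q)/2"
  define Z where "Z n = (w^^n) m" for n
  have m: "p < m" "m < q" using pq by (auto simp: m_def)
  have um: "u m \<noteq> m" using o m by (auto simp: orb_def)
  have WN: "G (w^^n)" for n by (rule G_funpow[OF W])
  have uP: "u (P n) = P n" for n unfolding P_def using comm_funpow[OF comm] pq by simp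
  have uZ: "u (Z n) \<noteq> Z n" for n unfolding Z_def using comm_funpow[OF comm] um G_eq[OF WN] by metis
  have PZ: "P n < Z n" for n unfolding P_def Z_def using m G_less[OF WN] by blast
  have ZP: "Z n < P (Suc n)" for n
  proof -
    have "Z n < (w^^n) q" unfolding Z_def using m G_less[OF WN] by blast
    also have "\<dots> \<le> (w^^n) (w p)" using wpq G_le[OF WN] by blast
    also have "\<dots> = P (Suc n)" unfolding P_def funpow_Suc_right by simp
    finally show ?thesis .
  qed
  have Pinc: "P n < P (Suc n)" for n using PZ ZP less_trans by blast
  have mono_P: "incseq P" using Pinc by (intro incseq_SucI) (simp add: less_imp_le)
  have m1: "m \<le> 1" using um G_out[OF U, of m] by (cases "m \<le> 1") auto
  have P1: "P n \<le> 1" for n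
  proof -
    have "p \<le> 1" using m m1 by simp
    hence "(w^^n) p \<le> (w^^n) 1" using G_le[OF WN] by blast
    thus ?thesis using G_1[OF WN] by (simp add: P_def)
  qed
  have bb: "bdd_above (range P)" unfolding bdd_above_def using P1 by auto
  define L where "L = (SUP n. P n)"
  have PL: "P n \<le> L" for n unfolding L_def using bb by (simp add: cSUP_upper)
  obtain e \<mu> \<kappa> where e: "e > 0" and germ: "\<forall>y\<in>{L-e..L}. u y = \<mu>*y+\<kappa>" using G_lg[OF U] by blast
  have "L - e < L" using e by simp
  then obtain n where n: "L - e < P n" unfolding L_def using less_cSUP_iff[OF _ bb] by (metis L_def UNIV_not_empty)
  have A: "\<mu> * P n + \<kappa> = P n" using germ n PL[of n] uP[of n] by auto
  have B: "\<mu> * P (Suc n) + \<kappa> = P (Suc n)" using germ n PL[of "Suc n"] uP[of "Suc n"] Pinc[of n] by auto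
  have "(\<mu>-1)*(P (Suc n) - P n) = (\<mu> * P (Suc n) + \<kappa> - P (Suc n)) - (\<mu> * P n + \<kappa> - P n)"
    by (simp add: algebra_simps)
  hence "(\<mu>-1)*(P (Suc n) - P n) = 0" using A B by simp
  hence mu: "\<mu> = 1" using Pinc[of n] by simp
  hence ka: "\<kappa> = 0" using A by simp
  have "Z n \<in> {L-e..L}" using n PZ[of n] ZP[of n] PL[of "Suc n"] by auto
  hence "u (Z n) = Z n" using germ mu ka by auto
  thus False using uZ by blast
qed

lemma comm_inv: assumes V: "G v" and comm: "\<forall>x. u (v x) = v (u x)" shows "\<forall>x. u (inv v x) = inv v (u x)"
proof
  fix x
  have "u (v (inv v x)) = v (u (inv v x))" using comm by blast
  hence "u x = v (u (inv v x))" using G_invr[OF V] by simp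
  thus "u (inv v x) = inv v (u x)" using G_invl[OF V] by metis
qed

lemma K1:
  assumes U: "G u" and V: "G v" and comm: "\<forall>x. u (v x) = v (u x)" and o: "orb u p q"
  shows "v p = p \<and> v q = q"
proof -
  have pq: "p < q" "u p = p" "u q = q" using o by (auto simp: orb_def)
  have vp: "v p = p"
  proof (rule ccontr)
    assume ne: "v p \<noteq> p"
    show False
    proof (cases "v p > p")
      case True then show False using S_lemma[OF U V comm o] by blast
    next
      case False
      hence "v p < p" using ne by simp
      hence "v (inv v p) > v p" using G_invr[OF V] by simp
      hence "inv v p > p" using G_less[OF V] by blast
      thus False using S_lemma[OF U G_inv[OF V] comm_inv[OF V comm] o] by blast
    qed
  qed
  have vq: "v q = q"
  proof (rule ccontr)
    assume ne: "v q \<noteq> q"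
    show False
    proof (cases "v q > q")
      case True
      define y where "y = inv v q"
      have vy: "v y = q" using G_invr[OF V] by (simp add: y_def)
      have "v y < v q" "v p < v y" using True vy vp pq by auto
      hence y: "y < q" "p < y" using G_less[OF V] by blast+
      hence "u y \<noteq> y" using o by (auto simp: orb_def)
      moreover have "v (u y) = v y" using comm vy pq by metis
      ultimately show False using G_eq[OF V] by blast
    next
      case False
      hence "v q < q" using ne by simp
      moreover have "p < v q" using vp pq G_less[OF V] by metis
      ultimately have "u (v q) \<noteq> v q" using o by (auto simp: orb_def)
      thus False using comm pq by metis
    qed
  qed
  show ?thesis using vp vq by blast
qed

lemma K2:
  assumes U: "G u" and V: "G v" and comm: "\<forall>x. u (v x) = v (u x)" and o: "orb u p q"
  shows "(\<forall>x\<in>{p<..<q}. v x = x) \<or> (\<forall>x\<in>{p<..<q}. v x \<noteq> x)"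
proof (cases "\<exists>x0\<in>{p<..<q}. v x0 = x0")
  case True
  then obtain x0 where x0: "p < x0" "x0 < q" "v x0 = x0" by auto
  have vp: "v p = p" using K1[OF U V comm o] by blast
  obtain e m k where e: "e > 0" and germ: "\<forall>y\<in>{p..p+e}. v y = m*y+k" using G_rg[OF V] by blast
  have comm': "\<forall>x\<in>{p<..<q}. v (u x) = u (v x)" using comm by simp
  show ?thesis using K2_local[OF U o comm' vp e germ x0] by blast
qed blast

lemma CG:
  assumes F: "G f" and Hh: "G h" and fb: "f b = b" and hb: "h b = b"
  shows "\<exists>\<delta>>0. \<forall>y\<in>{b..b+\<delta>}. f (h (inv f y)) = h y"
proof -
  obtain e1 s k1 where e1: "e1 > 0" and g1: "\<forall>y\<in>{b..b+e1}. f y = s*y+k1" using G_rg[OF F] by blast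
  obtain e2 t k2 where e2: "e2 > 0" and g2: "\<forall>y\<in>{b..b+e2}. h y = t*y+k2" using G_rg[OF Hh] by blast
  have s: "s > 0" by (rule affine_slope_pos[OF G_smono[OF F] e1 g1])
  have t: "t > 0" by (rule affine_slope_pos[OF G_smono[OF Hh] e2 g2])
  have k1: "k1 = b - s*b" using g1 e1 fb by auto
  have k2: "k2 = b - t*b" using g2 e2 hb by auto
  have f': "y \<in> {b..b+e1} \<Longrightarrow> f y = b + s*(y-b)" for y using g1 k1 by (simp add: algebra_simps)
  have h': "y \<in> {b..b+e2} \<Longrightarrow> h y = b + t*(y-b)" for y using g2 k2 by (simp add: algebra_simps)
  define \<delta> where "\<delta> = min (min (s*e1) (s*e2)) (min (s*e1/t) e2)"
  have d: "\<delta> > 0" using s t e1 e2 by (simp add: \<delta>_def)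
  have "\<forall>y\<in>{b..b+\<delta>}. f (h (inv f y)) = h y"
  proof
    fix y assume y: "y \<in> {b..b+\<delta>}"
    define z where "z = b + (y-b)/s"
    have zb: "z - b = (y-b)/s" by (simp add: z_def)
    have y0: "y - b \<ge> 0" "y - b \<le> \<delta>" using y by auto
    have "(y-b)/s \<le> e1" using y0 s by (simp add: pos_divide_le_eq \<delta>_def mult.commute)
    moreover have "(y-b)/s \<le> e2" using y0 s by (simp add: pos_divide_le_eq \<delta>_def mult.commute)
    moreover have "(y-b)/s \<ge> 0" using y0 s by simp
    ultimately have z1: "z \<in> {b..b+e1}" and z2: "z \<in> {b..b+e2}" using zb by auto
    have "f z = y" using f'[OF z1] zb s by simp
    hence iz: "inv f y = z" using G_invl[OF F] by metis
    have hz: "h z = b + t*((y-b)/s)" using h'[OF z2] zb by simp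
    have "t*((y-b)/s) \<le> e1"
    proof -
      have "y - b \<le> s*e1/t" using y0 by (simp add: \<delta>_def)
      hence "t*(y-b) \<le> s*e1" using t by (simp add: pos_le_divide_eq mult.commute)
      thus ?thesis using s by (simp add: pos_divide_le_eq mult.commute)
    qed
    moreover have "t*((y-b)/s) \<ge> 0" using y0 s t by simp
    ultimately have "h z \<in> {b..b+e1}" using hz by auto
    hence "f (h z) = b + s*(t*((y-b)/s))" using f' hz by simp
    also have "\<dots> = b + t*(y-b)" using s by simp
    also have "\<dots> = h y" using h' y0 by (simp add: \<delta>_def)
    finally show "f (h (inv f y)) = h y" using iz by simp
  qed
  thus ?thesis using d by blast
qed



lemma commg_comm: assumes A: "G a" and B: "G b" and h: "commg a b = id"
  shows "\<forall>x. b (a x) = a (b x)"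
proof
  fix x
  have "inv b (inv a (b (a x))) = x" using fun_cong[OF h, of x]
    by (simp add: commg_def rmul_def rinv_def)
  hence "inv a (b (a x)) = b x" using G_invr[OF B] by metis
  thus "b (a x) = a (b x)" using G_invr[OF A] by metis
qed

lemma ioo_eq: assumes "(p::real) < q" "{p<..<q} = {b<..<d}" shows "p = b \<and> q = d"
proof -
  have "{b<..<d} \<noteq> {}" using assms by auto
  hence bd: "b < d" by simp
  show ?thesis using assms cInf_greaterThanLessThan[OF assms(1)] cInf_greaterThanLessThan[OF bd]
    cSup_greaterThanLessThan[OF assms(1)] cSup_greaterThanLessThan[OF bd] by metis
qed

lemma part_i_aux:
  assumes F0: "G f0" and F1: "G f1" and Ph: "G \<phi>" and pa: "\<phi> a = a" and pc: "\<phi> c = c"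
    and pup: "\<forall>x\<in>{a<..<c}. \<phi> x > x"
    and oA: "orb f0 a c" and up: "\<forall>x\<in>{a<..<c}. f0 x > x"
    and o1: "orb f1 b1 d1" and b1a: "b1 \<le> a" and ad1: "a < d1" and notA: "\<not> orb f1 a c"
    and eq: "\<forall>x\<in>{\<phi> b1<..<\<phi> d1}. f0 x = f1 x"
  shows False
proof (cases "d1 < c")
  case True
  have "\<phi> b1 \<le> a" using b1a pa G_le[OF Ph] by metis
  moreover have "d1 < \<phi> d1" using pup ad1 True by auto
  ultimately have "f0 d1 = f1 d1" using eq ad1 by auto
  moreover have "f1 d1 = d1" using o1 by (simp add: orb_def)
  moreover have "f0 d1 > d1" using up ad1 True by auto
  ultimately show False by simp
next
  case False
  have pb: "\<phi> b1 \<le> a" using b1a pa G_le[OF Ph] by metis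
  have "c \<le> d1" using False by simp
  hence pd: "c \<le> \<phi> d1" using pc G_le[OF Ph] by metis
  have ac: "a < c" using oA by (simp add: orb_def)
  have "f1 a = a"
  proof (cases "\<phi> b1 < a")
    case True
    hence "f0 a = f1 a" using eq pd ac by auto
    thus ?thesis using oA by (simp add: orb_def)
  next
    case False
    hence "\<phi> b1 = \<phi> a" using pb pa by simp
    hence "b1 = a" using G_eq[OF Ph] by blast
    thus ?thesis using o1 by (simp add: orb_def)
  qed
  moreover have "f1 c = c"
  proof (cases "c < \<phi> d1")
    case True
    hence "f0 c = f1 c" using eq pb ac by auto
    thus ?thesis using oA by (simp add: orb_def)
  next
    case False
    hence "\<phi> d1 = \<phi> c" using pd pc by simp
    hence "d1 = c" using G_eq[OF Ph] by blast
    thus ?thesis using o1 by (simp add: orb_def)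
  qed
  moreover have "\<forall>x\<in>{a<..<c}. f1 x \<noteq> x" using eq up pb pd by fastforce
  ultimately have "orb f1 a c" using ac by (simp add: orb_def)
  thus False using notA by simp
qed



theorem lemma2p5:
  fixes f0 f1 :: "real \<Rightarrow> real" and a c :: real and n :: nat and b d :: "nat \<Rightarrow> real"
  assumes "PL0 f0" and "PL0 f1"
    and "commg (conjg f1 f0) (rmul f0 (rinv f1)) = id"
    and "commg (rmul f0 (rinv f1)) (conjg f1 (rmul f0 f0)) = id"
    and "a < c" and "up_bump f0 {a<..<c}"
    and "\<not> orbital f1 {a<..<c}"
    and "n \<ge> 1"
    and orbs: "\<forall>i\<in>{1..n}. b i < d i \<and> orbital f1 {b i<..<d i} \<and> {b i<..<d i} \<inter> {a<..<c} \<noteq> {}"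
    and incr: "\<forall>i\<in>{1..n}. \<forall>j\<in>{1..n}. i < j \<longrightarrow> d i \<le> b j"
    and all: "\<forall>B. orbital f1 B \<and> B \<inter> {a<..<c} \<noteq> {} \<longrightarrow> (\<exists>i\<in>{1..n}. B = {b i<..<d i})"
  shows "a < b 1
    \<and> (\<exists>p. 0 \<le> p \<and> p < c \<and> (\<forall>x\<in>{p..c}. f0 x = f1 x))
    \<and> d n = c
    \<and> (\<forall>p\<in>{0..1}. (\<forall>x\<in>{p..c}. f0 x = f1 x) \<and>
         (\<forall>q\<in>{0..1}. (\<forall>x\<in>{q..c}. f0 x = f1 x) \<longrightarrow> p \<le> q)
       \<longrightarrow> f0 (b n) \<ge> p)
    \<and> f0 (b 1) > b n"
proof -
  have F0: "G f0" by (rule PL0_G[OF assms(1)])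
  have F1: "G f1" by (rule PL0_G[OF assms(2)])
  have ac: "a < c" by fact
  define g where "g = inv f1 \<circ> f0"
  define H1 where "H1 = f0 \<circ> (f1 \<circ> inv f0)"
  define f00 where "f00 = f0 \<circ> f0"
  define H2 where "H2 = f00 \<circ> (f1 \<circ> inv f00)"
  have gG: "G g" unfolding g_def by (intro G_comp G_inv F0 F1)
  have H1G: "G H1" unfolding H1_def by (intro G_comp G_inv F0 F1)
  have F00: "G f00" unfolding f00_def by (intro G_comp F0)
  have H2G: "G H2" unfolding H2_def by (intro G_comp G_inv F00 F1)
  have c1: "\<forall>x. H1 (g x) = g (H1 x)"
  proof -
    have "conjg f1 f0 = H1" "rmul f0 (rinv f1) = g"
      by (simp_all add: conjg_def rmul_def rinv_def H1_def g_def comp_assoc)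
    thus ?thesis using commg_comm[OF H1G gG] assms(3) by metis
  qed
  have c2: "\<forall>x. H2 (g x) = g (H2 x)"
  proof -
    have "conjg f1 (rmul f0 f0) = H2" "rmul f0 (rinv f1) = g"
      by (simp_all add: conjg_def rmul_def rinv_def H2_def g_def f00_def comp_assoc)
    thus ?thesis using commg_comm[OF gG H2G] assms(4) by metis
  qed
  have gfix: "g y = y \<longleftrightarrow> f0 y = f1 y" for y
  proof
    assume "g y = y"
    hence "inv f1 (f0 y) = y" by (simp add: g_def)
    thus "f0 y = f1 y" using G_invr[OF F1] by metis
  next
    assume "f0 y = f1 y"
    thus "g y = y" by (simp add: g_def G_invl[OF F1])
  qed
  have H2eq: "H2 x = f0 (H1 (inv f0 x))" for x
  proof -
    have "inv f00 = inv f0 \<circ> inv f0" unfolding f00_def using G_bij[OF F0] by (simp add: o_inv_distrib)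
    thus ?thesis by (simp add: H2_def H1_def f00_def)
  qed
  have oA: "orb f0 a c" and up: "\<forall>x\<in>{a<..<c}. f0 x > x"
    using assms(6) orbital_iff[OF ac] by (auto simp: up_bump_def)
  have upI: "f0 x > x" if "a < x" "x < c" for x using up that by simp
  have notA: "\<not> orb f1 a c" using assms(7) orbital_iff[OF ac] by simp
  have oB: "orb f1 (b i) (d i)" if "i \<in> {1..n}" for i using orbs that orbital_iff by blast
  have wB: "\<exists>x. b i < x \<and> x < d i \<and> a < x \<and> x < c" if "i \<in> {1..n}" for i
  proof -
    have "{b i<..<d i} \<inter> {a<..<c} \<noteq> {}" using orbs that by blast
    then obtain x where "x \<in> {b i<..<d i} \<inter> {a<..<c}" by blast
    thus ?thesis by auto
  qed
  have allB: "\<exists>i\<in>{1..n}. p = b i \<and> q = d i" if o: "orb f1 p q" and x: "p < x" "x < q" "a < x" "x < c" for p q x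
  proof -
    have pq: "p < q" using o by (simp add: orb_def)
    have "orbital f1 {p<..<q}" using o orbital_iff[OF pq] by simp
    moreover have "{p<..<q} \<inter> {a<..<c} \<noteq> {}" using x by auto
    ultimately obtain i where i: "i \<in> {1..n}" "{p<..<q} = {b i<..<d i}" using all by blast
    thus ?thesis using ioo_eq[OF pq] by blast
  qed
  have a0: "0 \<le> a"
  proof (rule ccontr)
    assume "\<not> 0 \<le> a"
    define y where "y = (a + min 0 c)/2"
    have y: "a < y" "y < c" "y < 0" using \<open>\<not> 0 \<le> a\<close> ac by (auto simp: y_def)
    hence "f0 y = y" using G_out[OF F0] by auto
    moreover have "f0 y > y" using up y by simp
    ultimately show False by simp
  qed
  have c1le: "c \<le> 1"
  proof (rule ccontr)
    assume "\<not> c \<le> 1"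
    define y where "y = (c + max 1 a)/2"
    have y: "a < y" "y < c" "y > 1" using \<open>\<not> c \<le> 1\<close> ac by (auto simp: y_def)
    hence "f0 y = y" using G_out[OF F0] by auto
    moreover have "f0 y > y" using up y by simp
    ultimately show False by simp
  qed
  have f0in: "a < f0 x \<and> f0 x < c" if "a < x" "x < c" for x using orb_in[OF F0 oA] that by blast
  have f0a: "f0 a = a" and f0c: "f0 c = c" using oA by (auto simp: orb_def)
  have f00a: "f00 a = a" and f00c: "f00 c = c" using f0a f0c by (auto simp: f00_def)
  have f00up: "\<forall>x\<in>{a<..<c}. f00 x > x"
  proof
    fix x assume x: "x \<in> {a<..<c}"
    hence "f0 x \<in> {a<..<c}" using f0in by auto
    hence "f0 (f0 x) > f0 x" using up by blast
    moreover have "f0 x > x" using up x by blast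
    ultimately show "f00 x > x" by (simp add: f00_def)
  qed
  have E1: "g (f0 p) = f0 p \<and> g (f0 q) = f0 q" if "orb f1 p q" for p q
  proof -
    have "orb H1 (f0 p) (f0 q)" using orb_conj[OF F0 that] by (simp add: H1_def)
    thus ?thesis using K1[OF H1G gG c1] by blast
  qed
  have E2: "g (f00 p) = f00 p \<and> g (f00 q) = f00 q" if "orb f1 p q" for p q
  proof -
    have "orb H2 (f00 p) (f00 q)" using orb_conj[OF F00 that] by (simp add: H2_def)
    thus ?thesis using K1[OF H2G gG c2] by blast
  qed
  have D1: "(\<forall>x\<in>{f0 p<..<f0 q}. f0 x = f1 x) \<or> orb g (f0 p) (f0 q)" if "orb f1 p q" for p q
  proof -
    have o: "orb H1 (f0 p) (f0 q)" using orb_conj[OF F0 that] by (simp add: H1_def)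
    have "f0 p < f0 q" using o by (simp add: orb_def)
    thus ?thesis using K2[OF H1G gG c1 o] E1[OF that] gfix by (auto simp: orb_def)
  qed
  have D2: "(\<forall>x\<in>{f00 p<..<f00 q}. f0 x = f1 x) \<or> orb g (f00 p) (f00 q)" if "orb f1 p q" for p q
  proof -
    have o: "orb H2 (f00 p) (f00 q)" using orb_conj[OF F00 that] by (simp add: H2_def)
    have "f00 p < f00 q" using o by (simp add: orb_def)
    thus ?thesis using K2[OF H2G gG c2 o] E2[OF that] gfix by (auto simp: orb_def)
  qed
  have n1: "1 \<in> {1..n}" "n \<in> {1..n}" using assms(8) by auto
  have bd: "b i < d i" if "i \<in> {1..n}" for i using oB[OF that] by (simp add: orb_def)
  have bic: "b i < c" "a < d i" if "i \<in> {1..n}" for i using wB[OF that] by auto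
  have b1le: "b 1 \<le> b i" if "i \<in> {1..n}" for i
  proof (cases "i = 1")
    case False
    hence "d 1 \<le> b i" using incr n1 that by auto
    thus ?thesis using bd[OF n1(1)] by simp
  qed simp
  have dle: "d i \<le> b n" if "i \<in> {1..n}" "i < n" for i using incr n1 that by auto
  have pi: "a < b 1"
  proof (rule ccontr)
    assume "\<not> a < b 1"
    hence b1a: "b 1 \<le> a" by simp
    have o1: "orb f1 (b 1) (d 1)" by (rule oB[OF n1(1)])
    have ad1: "a < d 1" using bic(2)[OF n1(1)] .
    have nE1: "\<not> (\<forall>x\<in>{f0 (b 1)<..<f0 (d 1)}. f0 x = f1 x)"
      using part_i_aux[OF F0 F1 F0 f0a f0c up oA up o1 b1a ad1 notA] by blast
    have nE2: "\<not> (\<forall>x\<in>{f00 (b 1)<..<f00 (d 1)}. f0 x = f1 x)"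
      using part_i_aux[OF F0 F1 F00 f00a f00c f00up oA up o1 b1a ad1 notA] by blast
    have og1: "orb g (f0 (b 1)) (f0 (d 1))" using D1[OF o1] nE1 by blast
    have og2: "orb g (f00 (b 1)) (f00 (d 1))" using D2[OF o1] nE2 by blast
    define t where "t = (a + min (d 1) c)/2"
    have t: "a < t" "t < min (d 1) c" using ad1 ac by (auto simp: t_def)
    have lb: "\<phi> (b 1) < t" if "G \<phi>" "\<phi> a = a" for \<phi>
    proof -
      have "\<phi> (b 1) \<le> \<phi> a" using b1a G_le[OF that(1)] by blast
      thus ?thesis using that(2) t by simp
    qed
    have ub: "t < \<phi> (d 1)" if "G \<phi>" "\<phi> c = c" "\<forall>x\<in>{a<..<c}. \<phi> x > x" for \<phi>
    proof (cases "d 1 < c")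
      case True
      hence "d 1 < \<phi> (d 1)" using that(3) ad1 by auto
      thus ?thesis using t by simp
    next
      case False
      hence "\<phi> c \<le> \<phi> (d 1)" using G_le[OF that(1)] by simp
      thus ?thesis using that(2) t by simp
    qed
    have ov: "f0 (b 1) = f00 (b 1) \<and> f0 (d 1) = f00 (d 1)"
      by (rule orb_overlap[OF og1 og2 lb[OF F0 f0a] ub[OF F0 f0c up] lb[OF F00 f00a] ub[OF F00 f00c f00up]])
    have fb1: "f0 (b 1) = b 1" using ov G_eq[OF F0] by (simp add: f00_def)
    have fd1: "f0 (d 1) = d 1" using ov G_eq[OF F0] by (simp add: f00_def)
    have cd1: "c \<le> d 1"
    proof (rule ccontr)
      assume "\<not> c \<le> d 1"
      hence "f0 (d 1) > d 1" using up ad1 by auto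
      thus False using fd1 by simp
    qed
    have side: "b 1 < a \<or> c < d 1"
    proof (rule ccontr)
      assume "\<not> (b 1 < a \<or> c < d 1)"
      hence "b 1 = a" "d 1 = c" using b1a cd1 by auto
      thus False using o1 notA by simp
    qed
    have og: "orb g (b 1) (d 1)" using og1 fb1 fd1 by simp
    have if0: "inv f0 (b 1) = b 1" using fb1 G_invl[OF F0] by metis
    have H1b: "H1 (b 1) = b 1" using if0 o1 fb1 by (simp add: H1_def orb_def)
    obtain \<delta> where dl: "\<delta> > 0" and cg: "\<forall>y\<in>{b 1..b 1+\<delta>}. f0 (H1 (inv f0 y)) = H1 y"
      using CG[OF F0 H1G fb1 H1b] by blast
    define v where "v = inv H2 \<circ> H1"
    have vG: "G v" unfolding v_def by (intro G_comp G_inv H1G H2G)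
    have ci: "\<forall>x. g (inv H2 x) = inv H2 (g x)" using comm_inv[OF H2G, of g] c2 by metis
    have cv: "\<forall>x. g (v x) = v (g x)" using ci c1 by (simp add: v_def)
    define x0 where "x0 = b 1 + min \<delta> (d 1 - b 1) / 2"
    have mm: "min \<delta> (d 1 - b 1) > 0" "min \<delta> (d 1 - b 1) \<le> d 1 - b 1" "min \<delta> (d 1 - b 1) \<le> \<delta>"
      using dl bd[OF n1(1)] by auto
    have gen: "b 1 < b 1 + mu/2 \<and> b 1 + mu/2 < d 1 \<and> b 1 + mu/2 \<le> b 1 + \<delta>"
      if "0 < mu" "mu \<le> d 1 - b 1" "mu \<le> \<delta>" for mu :: real using that by linarith
    have x0a: "b 1 < x0" "x0 < d 1" "x0 \<le> b 1+\<delta>" using gen[OF mm] unfolding x0_def by auto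
    note x0b = x0a(2) and x0c = x0a(3)
    have x0: "b 1 < x0" "x0 < d 1" "x0 \<in> {b 1..b 1+\<delta>}" using x0a x0b x0c by auto
    have "H2 x0 = H1 x0" using cg x0(3) H2eq by simp
    hence vx0: "v x0 = x0" using G_invl[OF H2G] by (metis v_def comp_apply)
    have vid: "\<forall>x\<in>{b 1<..<d 1}. v x = x" using K2[OF gG vG cv og] vx0 x0 by auto
    have H12: "H1 x = H2 x" if "b 1 < x" "x < d 1" for x
    proof -
      have "inv H2 (H1 x) = x" using vid that by (simp add: v_def)
      thus ?thesis using G_invr[OF H2G] by metis
    qed
    have f0in1: "b 1 < f0 y \<and> f0 y < d 1" if "b 1 < y" "y < d 1" for y
      using that fb1 fd1 G_less[OF F0] by metis
    have loc: "f1 y = f0 (f1 (inv f0 y))" if y: "b 1 < y" "y < d 1" for y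
    proof -
      have "H1 (f0 y) = H2 (f0 y)" using H12 f0in1[OF y] by blast
      hence "f0 (f1 y) = f0 (H1 y)" using H2eq G_invl[OF F0] by (simp add: H1_def)
      hence "f0 (f1 y) = f0 (f0 (f1 (inv f0 y)))" by (simp add: H1_def)
      thus ?thesis using G_eq[OF F0] by blast
    qed
    have commloc: "\<forall>x\<in>{b 1<..<d 1}. f0 (f1 x) = f1 (f0 x)"
    proof
      fix x assume x: "x \<in> {b 1<..<d 1}"
      hence "f1 (f0 x) = f0 (f1 (inv f0 (f0 x)))" using loc f0in1 by auto
      thus "f0 (f1 x) = f1 (f0 x)" using G_invl[OF F0] by simp
    qed
    obtain e m k where e: "e > 0" and germ: "\<forall>y\<in>{b 1..b 1+e}. f0 y = m*y+k" using G_rg[OF F0] by blast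
    define z where "z = (if b 1 < a then a else c)"
    have z: "b 1 < z" "z < d 1" "f0 z = z" using side ac b1a cd1 f0a f0c ad1 by (auto simp: z_def)
    have "\<forall>x\<in>{b 1<..<d 1}. f0 x = x" by (rule K2_local[OF F1 o1 commloc fb1 e germ z])
    moreover have "(a+c)/2 \<in> {b 1<..<d 1}" using b1a cd1 ac by auto
    moreover have "(a+c)/2 \<in> {a<..<c}" using ac by simp
    hence "f0 ((a+c)/2) > (a+c)/2" using up by blast
    ultimately show False by auto
  qed
  have bin: "a < b i" "b i < c" if "i \<in> {1..n}" for i using pi b1le[OF that] bic[OF that] by auto
  have on: "orb f1 (b n) (d n)" by (rule oB[OF n1(2)])
  have pIII: "d n = c"
  proof (rule ccontr)
    assume ne: "d n \<noteq> c"
    show False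
    proof (cases "d n < c")
      case True
      have f1id: "f1 y = y" if y: "d n < y" "y < c" for y
      proof (rule ccontr)
        assume "f1 y \<noteq> y"
        then obtain p q where pq: "orb f1 p q" "p < y" "y < q" using orb_exists[OF F1] by blast
        have "a < y" using y bin[OF n1(2)] bd[OF n1(2)] by simp
        then obtain i where i: "i \<in> {1..n}" "p = b i" "q = d i" using allB[OF pq(1) pq(2,3) _ y(2)] by blast
        show False
        proof (cases "i < n")
          case True
          hence "d i \<le> b n" using dle i by blast
          thus False using pq i y bd[OF n1(2)] by simp
        next
          case False
          hence "i = n" using i by simp
          thus False using pq i y by simp
        qed
      qed
      have dn: "a < d n" "d n < c" using True bic[OF n1(2)] by auto
      have "g (f0 (d n)) = f0 (d n)" using E1[OF on] by blast
      hence e1: "f0 (f0 (d n)) = f1 (f0 (d n))" using gfix by blast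
      have fd: "d n < f0 (d n)" "f0 (d n) < c" using up dn f0in by auto
      hence "f1 (f0 (d n)) = f0 (d n)" using f1id by blast
      moreover have "a < f0 (d n)" using fd dn by linarith
      hence "f0 (f0 (d n)) > f0 (d n)" using upI fd(2) by blast
      ultimately show False using e1 by simp
    next
      case False
      hence cdn: "c < d n" using ne by simp
      have "f1 c \<noteq> c" using on bin[OF n1(2)] cdn by (auto simp: orb_def)
      hence nc: "f0 c \<noteq> f1 c" using f0c by simp
      have bn: "a < b n" "b n < c" using bin[OF n1(2)] by auto
      have A1: "f0 (b n) < c" "c < f0 (d n)" using f0in[OF bn] cdn f0c G_less[OF F0] by metis+
      have A2: "f00 (b n) < c" "c < f00 (d n)"
      proof -
        have "f0 (b n) > a" using f0in[OF bn] by blast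
        thus "f00 (b n) < c" using f0in A1(1) by (simp add: f00_def)
        show "c < f00 (d n)" using cdn f00c G_less[OF F00] by metis
      qed
      have "c \<in> {f0 (b n)<..<f0 (d n)}" using A1 by simp
      hence "\<not> (\<forall>x\<in>{f0 (b n)<..<f0 (d n)}. f0 x = f1 x)" using nc by blast
      hence og1: "orb g (f0 (b n)) (f0 (d n))" using D1[OF on] by blast
      have "c \<in> {f00 (b n)<..<f00 (d n)}" using A2 by simp
      hence "\<not> (\<forall>x\<in>{f00 (b n)<..<f00 (d n)}. f0 x = f1 x)" using nc by blast
      hence og2: "orb g (f00 (b n)) (f00 (d n))" using D2[OF on] by blast
      have "f0 (b n) = f00 (b n)" using orb_overlap[OF og1 og2 A1 A2] by blast
      hence "f0 (b n) = b n" using G_eq[OF F0] by (simp add: f00_def)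
      moreover have "f0 (b n) > b n" using up bn by auto
      ultimately show False by simp
    qed
  qed
  have bn: "a < b n" "b n < c" using bin[OF n1(2)] by auto
  have fbn: "a < f0 (b n)" "f0 (b n) < c" using f0in[OF bn] by auto
  have agree: "\<forall>x\<in>{f0 (b n)..c}. f0 x = f1 x"
  proof -
    have ffb: "f0 (b n) < f00 (b n)" "f00 (b n) < c" using up fbn f0in[OF fbn] by (auto simp: f00_def)
    have gf: "g (f00 (b n)) = f00 (b n)" using E2[OF on] by blast
    have fdn: "f0 (d n) = c" using pIII f0c by simp
    have "\<not> orb g (f0 (b n)) (f0 (d n))"
    proof
      assume og: "orb g (f0 (b n)) (f0 (d n))"
      have "f00 (b n) < f0 (d n)" using ffb fdn by simp
      hence "g (f00 (b n)) \<noteq> f00 (b n)" using orbD(4)[OF og ffb(1)] by blast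
      thus False using gf by blast
    qed
    hence "\<forall>x\<in>{f0 (b n)<..<f0 (d n)}. f0 x = f1 x" using D1[OF on] by blast
    hence int: "\<forall>x\<in>{f0 (b n)<..<c}. f0 x = f1 x" by (simp only: fdn)
    have e1: "f0 (f0 (b n)) = f1 (f0 (b n))" using E1[OF on] gfix by blast
    have "f1 (d n) = d n" using on by (simp add: orb_def)
    hence e2: "f0 c = f1 c" using pIII f0c by metis
    show ?thesis
    proof
      fix x assume x: "x \<in> {f0 (b n)..c}"
      show "f0 x = f1 x"
      proof (cases "x = f0 (b n) \<or> x = c")
        case True
        then show ?thesis
        proof
          assume "x = f0 (b n)" thus ?thesis using e1 by metis
        next
          assume "x = c" thus ?thesis using e2 by metis
        qed
      next
        case False
        hence "x \<in> {f0 (b n)<..<c}" using x by auto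
        then show ?thesis using int by blast
      qed
    qed
  qed
  have pII: "\<exists>p. 0 \<le> p \<and> p < c \<and> (\<forall>x\<in>{p..c}. f0 x = f1 x)"
  proof -
    have "0 \<le> f0 (b n) \<and> f0 (b n) < c" using fbn a0 by linarith
    thus ?thesis using agree by blast
  qed
  have pIV: "\<forall>p\<in>{0..1}. (\<forall>x\<in>{p..c}. f0 x = f1 x) \<and>
         (\<forall>q\<in>{0..1}. (\<forall>x\<in>{q..c}. f0 x = f1 x) \<longrightarrow> p \<le> q) \<longrightarrow> f0 (b n) \<ge> p"
  proof (intro ballI impI)
    fix p assume "p \<in> {0..1}" and h: "(\<forall>x\<in>{p..c}. f0 x = f1 x) \<and>
         (\<forall>q\<in>{0..1}. (\<forall>x\<in>{q..c}. f0 x = f1 x) \<longrightarrow> p \<le> q)"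
    have "0 \<le> f0 (b n)" "f0 (b n) \<le> 1" using fbn a0 c1le by linarith+
    hence "f0 (b n) \<in> {0..1}" by simp
    thus "f0 (b n) \<ge> p" using h agree by blast
  qed
  have pV: "f0 (b 1) > b n"
  proof (rule ccontr)
    assume "\<not> f0 (b 1) > b n"
    hence le: "f0 (b 1) \<le> b n" by simp
    have o1: "orb f1 (b 1) (d 1)" by (rule oB[OF n1(1)])
    have b1: "a < b 1" "b 1 < c" using bin[OF n1(1)] by auto
    define y where "y = f0 (b 1)"
    have y: "a < y" "y < c" "b 1 < y" using f0in[OF b1] up b1 by (auto simp: y_def)
    have "f0 y = f1 y" using E1[OF o1] gfix by (simp add: y_def)
    moreover have "f0 y > y" using up y by auto
    ultimately have "f1 y \<noteq> y" by simp
    then obtain p q where pq: "orb f1 p q" "p < y" "y < q" using orb_exists[OF F1] by blast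
    then obtain j where j: "j \<in> {1..n}" "p = b j" "q = d j" using allB[OF pq(1) pq(2,3) y(1,2)] by blast
    have "j \<noteq> n" using j pq le by (auto simp: y_def)
    hence jn: "j < n" using j by simp
    have oj: "orb f1 (b j) (d j)" by (rule oB[OF j(1)])
    have djc: "d j < c" using dle[OF j(1) jn] bn by simp
    have bj: "b 1 \<le> b j" by (rule b1le[OF j(1)])
    have "f0 (b 1) \<le> f0 (b j)" using bj G_le[OF F0] by blast
    moreover have "b j < y" using pq j by simp
    ultimately have fbj1: "b j < f0 (b j)" unfolding y_def by linarith
    have "f0 (b j) < f0 y" using pq j G_less[OF F0] by simp
    moreover have "f0 y = f1 y" using E1[OF o1] gfix by (simp add: y_def)
    moreover have "f1 y < d j" using orb_in[OF F1 oj] pq j by simp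
    ultimately have fbj2: "f0 (b j) < d j" by simp
    have "g (f00 (b j)) = f00 (b j)" using E2[OF oj] by blast
    moreover have "f0 (b j) < f00 (b j)" "f00 (b j) < f0 (d j)" using fbj1 fbj2 G_less[OF F0] by (simp_all add: f00_def)
    ultimately have "\<not> orb g (f0 (b j)) (f0 (d j))" by (auto simp: orb_def)
    hence eqj: "\<forall>x\<in>{f0 (b j)<..<f0 (d j)}. f0 x = f1 x" using D1[OF oj] by blast
    have dj: "a < d j" "d j < c" using bic(2)[OF j(1)] djc by auto
    have "d j < f0 (d j)" using upI dj by blast
    hence "d j \<in> {f0 (b j)<..<f0 (d j)}" using fbj2 by simp
    hence "f0 (d j) = f1 (d j)" using eqj by blast
    moreover have "f1 (d j) = d j" using oj by (simp add: orb_def)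
    ultimately show False using \<open>d j < f0 (d j)\<close> by simp
  qed
  show ?thesis using pi pII pIII pIV pV by blast
qed

end
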